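(* For $k\ge2$ the following hold (with the convention $\Gamma_{k,r}(d,j)=0$ if $r<0$, $r>k$ or $d>k$). For $d\ge1$: $\Gamma_{k,r}(d,1)=\Gamma_{k-1,r-1}(d,2)+\Gamma_{k-1,r}(d-1,1)+\Gamma_{k-1,r}(d,2)$, $\Gamma_{k,r}(d,2)=\Gamma_{k-1,r-1}(d,1)+2\Gamma_{k-1,r}(d+1,2)$, $\Gamma_{k,r}(d,3)=\Gamma_{k-1,r-1}(d,4)+2\Gamma_{k-1,r}(d+1,3)$, $\Gamma_{k,r}(d,4)=\Gamma_{k-1,r-1}(d,3)+\Gamma_{k-1,r}(d-1,4)+\Gamma_{k-1,r}(d,3)$. For $d=0$: $\Gamma_{k,r}(0,1)=\Gamma_{k-1,r-1}(0,2)+2\Gamma_{k-1,r}(1,3)$, $\Gamma_{k,r}(0,2)=\Gamma_{k-1,r-1}(0,1)+2\Gamma_{k-1,r}(1,2)$, $\Gamma_{k,r}(0,3)=\Gamma_{k-1,r-1}(0,4)+2\Gamma_{k-1,r}(1,3)$, $\Gamma_{k,r}(0,4)=\Gamma_{k-1,r-1}(0,3)+2\Gamma_{k-1,r}(1,2)$.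
   Context: $\mathcal B$ is the $2$-regular Bethe lattice (infinite tree, every node of degree $3$), a metric graph with edges of length $1$; $m(B)$ is the midpoint of edge $B$, $\mathrm{dist}$ the path distance. Each edge has two orientations, $-\vec C$ the opposite of $\vec C$; $\vec C\to\vec D$ means the terminal node of $\vec C$ is the initial node of $\vec D$. A path of length $k\ge1$ from $\vec A$ to $\vec B$ is a tuple $(\vec C_0,\dots,\vec C_k)$ with $\vec C_0=\vec A$, $\vec C_k=\vec B$ and $\vec C_i\to\vec C_{i+1}$ for all $i$; an inversion is an index $i$ with $\vec C_{i+1}=-\vec C_i$. Types of $(\vec A,\vec B)$ with $d=\mathrm{dist}(m(A),m(B))\ge1$: $\vec A$ points toward $B$ if its terminal node lies on the geodesic from $m(A)$ to $m(B)$; $\vec B$ points away from $A$ if its initial node lies on that geodesic. Type 1: $\vec A$ toward, $\vec B$ away; type 2: $\vec A$ toward, $\vec B$ toward $A$; type 3: $\vec A$ away from $B$, $\vec B$ toward $A$; type 4: $\vec A$ away, $\vec B$ away. For $d=0$, types 1 and 3 mean $\vec B=\vec A$, types 2 and 4 mean $\vec B=-\vec A$. $\Gamma_{k,r}(d,j)$ is the number of paths of length $k$ with exactly $r$ inversions from $\vec A$ to $\vec B$, where $(\vec A,\vec B)$ is any pair at distance $d$ of type $j$ (this number depends only on $k,r,d,j$). *)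

theory Defs
  imports Complex_Main
begin

text \<open>Model of the 2-regular Bethe lattice (3-regular infinite tree): vertices are
reduced words over the letters 0,1,2 (no two consecutive equal letters), i.e. elements
of the free product of three copies of Z/2Z; a word is adjacent to its one-letter
extensions.\<close>

definition bvert :: "nat list \<Rightarrow> bool" where
  "bvert w \<longleftrightarrow> set w \<subseteq> {0,1,2} \<and> (\<forall>i. Suc i < length w \<longrightarrow> w ! i \<noteq> w ! Suc i)"

definition badj :: "nat list \<Rightarrow> nat list \<Rightarrow> bool" where
  "badj u v \<longleftrightarrow> bvert u \<and> bvert v \<and> (\<exists>x. v = u @ [x] \<or> u = v @ [x])"

definition vdist :: "nat list \<Rightarrow> nat list \<Rightarrow> nat" where
  "vdist u v = (LEAST n. (badj ^^ n) u v)"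

text \<open>Oriented edges: pairs (initial node, terminal node).\<close>
type_synonym oedge = "nat list \<times> nat list"

definition is_oedge :: "oedge \<Rightarrow> bool" where
  "is_oedge A \<longleftrightarrow> badj (fst A) (snd A)"

definition opp :: "oedge \<Rightarrow> oedge" where
  "opp A = (snd A, fst A)"

definition follows :: "oedge \<Rightarrow> oedge \<Rightarrow> bool" where
  "follows C D \<longleftrightarrow> snd C = fst D"

text \<open>Distance in the metric graph (edge length 1) between the midpoints of the
underlying edges.\<close>
definition mdist :: "oedge \<Rightarrow> oedge \<Rightarrow> nat" where
  "mdist A B = (if {fst A, snd A} = {fst B, snd B} then 0
     else 1 + Min {vdist x y | x y. x \<in> {fst A, snd A} \<and> y \<in> {fst B, snd B}})"

text \<open>Distance in the metric graph from the midpoint of the edge of A to a vertex v.\<close>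
definition mvdist :: "oedge \<Rightarrow> nat list \<Rightarrow> real" where
  "mvdist A v = 1/2 + real (min (vdist (fst A) v) (vdist (snd A) v))"

definition on_geod :: "oedge \<Rightarrow> oedge \<Rightarrow> nat list \<Rightarrow> bool" where
  "on_geod A B v \<longleftrightarrow> mvdist A v + mvdist B v = real (mdist A B)"

definition ptype :: "oedge \<Rightarrow> oedge \<Rightarrow> nat \<Rightarrow> bool" where
  "ptype A B j \<longleftrightarrow>
    (if mdist A B = 0 then
       ((j = 1 \<or> j = 3) \<and> B = A) \<or> ((j = 2 \<or> j = 4) \<and> B = opp A)
     else
       (j = 1 \<and> on_geod A B (snd A) \<and> on_geod A B (fst B)) \<or>
       (j = 2 \<and> on_geod A B (snd A) \<and> on_geod A B (snd B)) \<or>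
       (j = 3 \<and> on_geod A B (fst A) \<and> on_geod A B (snd B)) \<or>
       (j = 4 \<and> on_geod A B (fst A) \<and> on_geod A B (fst B)))"

definition is_path :: "nat \<Rightarrow> oedge \<Rightarrow> oedge \<Rightarrow> oedge list \<Rightarrow> bool" where
  "is_path k A B cs \<longleftrightarrow> length cs = Suc k \<and> (\<forall>C \<in> set cs. is_oedge C) \<and>
     cs ! 0 = A \<and> cs ! k = B \<and> (\<forall>i < k. follows (cs ! i) (cs ! Suc i))"

definition inversions :: "nat \<Rightarrow> oedge list \<Rightarrow> nat" where
  "inversions k cs = card {i. i < k \<and> cs ! Suc i = opp (cs ! i)}"

definition npaths :: "nat \<Rightarrow> nat \<Rightarrow> oedge \<Rightarrow> oedge \<Rightarrow> nat" where
  "npaths k r A B = card {cs. is_path k A B cs \<and> inversions k cs = r}"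

definition Gamma :: "nat \<Rightarrow> int \<Rightarrow> nat \<Rightarrow> nat \<Rightarrow> nat" where
  "Gamma k r d j = (if r < 0 \<or> r > int k \<or> d > k then 0 else
     (SOME n. \<exists>A B. is_oedge A \<and> is_oedge B \<and> mdist A B = d \<and> ptype A B j \<and>
                     n = npaths k (nat r) A B))"

end

theory Submission
  imports Defs
begin


fun lcp :: "nat list \<Rightarrow> nat list \<Rightarrow> nat" where
  "lcp (x#xs) (y#ys) = (if x = y then Suc (lcp xs ys) else 0)"
| "lcp _ _ = 0"

definition dl :: "nat list \<Rightarrow> nat list \<Rightarrow> nat" where
  "dl u v = length u + length v - 2 * lcp u v"

lemma lcp_le1: "lcp u v \<le> length u"
  by (induction u v rule: lcp.induct) auto
lemma lcp_le2: "lcp u v \<le> length v"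
  by (induction u v rule: lcp.induct) auto
lemma lcp_sym: "lcp u v = lcp v u"
  by (induction u v rule: lcp.induct) auto
lemma lcp_self: "lcp u u = length u"
  by (induction u) auto
lemma lcp_app: "lcp u (u @ w) = length u"
  by (induction u) auto

lemma lcp_snoc: "lcp a (u @ [x]) = (if lcp a u = length u \<and> length u < length a \<and> a ! length u = x
   then Suc (length u) else lcp a u)"
proof (induction u arbitrary: a)
  case Nil
  then show ?case by (cases a) auto
next
  case (Cons z u)
  then show ?case by (cases a) auto
qed

lemma lcp_eq_len: "lcp a u = length u \<Longrightarrow> u = take (length u) a"
proof (induction a u rule: lcp.induct)
  case (1 x xs y ys)
  then show ?case by (auto split: if_splits)
qed auto

lemma dl_sym: "dl u v = dl v u"
  unfolding dl_def by (simp add: lcp_sym)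
lemma dl_self[simp]: "dl u u = 0"
  unfolding dl_def by (simp add: lcp_self)
lemma dl_zero: "dl u v = 0 \<longleftrightarrow> u = v"
proof
  assume "dl u v = 0"
  then have "lcp u v = length u" "lcp u v = length v"
    using lcp_le1[of u v] lcp_le2[of u v] unfolding dl_def by auto
  then have "u = take (length u) v" using lcp_eq_len[of v u] lcp_sym[of u v] by simp
  then show "u = v" using \<open>lcp u v = length u\<close> \<open>lcp u v = length v\<close> by simp
qed simp

lemma dl_snoc: "dl a (u @ [x]) = (if lcp a u = length u \<and> length u < length a \<and> a ! length u = x
   then dl a u - 1 else dl a u + 1)"
  "lcp a u = length u \<and> length u < length a \<Longrightarrow> dl a u \<ge> 1"
  using lcp_le1[of a u] lcp_le2[of a u] unfolding dl_def lcp_snoc by auto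

lemma badj_sym: "badj u v = badj v u"
  unfolding badj_def by auto

lemma dl_adj: "badj u v \<Longrightarrow> dl a v = dl a u + 1 \<or> dl a u = dl a v + 1"
proof -
  have *: "dl a (w @ [x]) = dl a w + 1 \<or> dl a w = dl a (w @ [x]) + 1" for w x
    using dl_snoc(1)[of a w x] dl_snoc(2)[of a w] by auto
  assume "badj u v"
  then obtain x where "v = u @ [x] \<or> u = v @ [x]" unfolding badj_def by auto
  then show ?thesis using * by auto
qed

lemma dl_adj1: "badj u v \<Longrightarrow> dl u v = 1"
  unfolding badj_def using dl_snoc[of u u] dl_snoc[of v v] dl_sym by auto



lemma bvert_snoc: "bvert (v @ [x]) \<longleftrightarrow> bvert v \<and> x \<in> {0,1,2} \<and> (v \<noteq> [] \<longrightarrow> last v \<noteq> x)"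
proof -
  have A: "(\<forall>i. Suc i < length (v@[x]) \<longrightarrow> (v@[x]) ! i \<noteq> (v@[x]) ! Suc i) \<longleftrightarrow>
        (\<forall>i. Suc i < length v \<longrightarrow> v ! i \<noteq> v ! Suc i) \<and> (v \<noteq> [] \<longrightarrow> last v \<noteq> x)"
  proof (intro iffI conjI impI allI)
    fix i assume H: "\<forall>i. Suc i < length (v@[x]) \<longrightarrow> (v@[x]) ! i \<noteq> (v@[x]) ! Suc i" "Suc i < length v"
    then show "v ! i \<noteq> v ! Suc i" using H(1)[rule_format, of i] by (simp add: nth_append)
  next
    assume H: "\<forall>i. Suc i < length (v@[x]) \<longrightarrow> (v@[x]) ! i \<noteq> (v@[x]) ! Suc i" "v \<noteq> []"
    then show "last v \<noteq> x" using H(1)[rule_format, of "length v - 1"]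
      by (simp add: nth_append last_conv_nth)
  next
    fix i assume H: "(\<forall>i. Suc i < length v \<longrightarrow> v ! i \<noteq> v ! Suc i) \<and> (v \<noteq> [] \<longrightarrow> last v \<noteq> x)"
      "Suc i < length (v @ [x])"
    show "(v @ [x]) ! i \<noteq> (v @ [x]) ! Suc i"
    proof (cases "Suc i < length v")
      case True then show ?thesis using H by (simp add: nth_append)
    next
      case False
      then have si: "Suc i = length v" using H(2) by simp
      then have "last v = v ! i" by (metis diff_Suc_1 last_conv_nth list.size(3) nat.distinct(1))
      then show ?thesis using H(1) si by (auto simp add: nth_append)
    qed
  qed
  show ?thesis unfolding bvert_def using A by auto
qed

lemma bvert_Nil[simp]: "bvert []" unfolding bvert_def by auto

lemma bvert_take: "bvert w \<Longrightarrow> bvert (take n w)"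
  unfolding bvert_def by (auto dest: in_set_takeD)

lemma bvert_butlast: "bvert w \<Longrightarrow> bvert (butlast w)"
  using bvert_take[of w "length w - 1"] by (simp add: butlast_conv_take)

lemma badj_vert: "badj u v \<Longrightarrow> bvert u \<and> bvert v" unfolding badj_def by auto

lemma badj_ne: "badj u v \<Longrightarrow> u \<noteq> v"
  using dl_adj1 by fastforce

lemma closer_unique:
  assumes "badj v w1" "badj v w2" "dl a w1 < dl a v" "dl a w2 < dl a v"
  shows "w1 = w2"
proof -
  have cl_child: "lcp a v = length v \<and> length v < length a \<and> a ! length v = x"
    if "dl a (v @ [x]) < dl a v" for x
    using that dl_snoc(1)[of a v x] by (auto split: if_splits)
  have cl_par: "\<not> (lcp a w = length w \<and> length w < length a \<and> a ! length w = x)"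
    if "dl a w < dl a (w @ [x])" for w x
    using that dl_snoc(1)[of a w x] dl_snoc(2)[of a w] by (auto split: if_splits)
  obtain x1 where 1: "w1 = v @ [x1] \<or> v = w1 @ [x1]" using assms(1) unfolding badj_def by auto
  obtain x2 where 2: "w2 = v @ [x2] \<or> v = w2 @ [x2]" using assms(2) unfolding badj_def by auto
  show ?thesis
  proof (cases "w1 = v @ [x1]")
    case c1: True
    show ?thesis
    proof (cases "w2 = v @ [x2]")
      case True
      then show ?thesis using c1 cl_child assms by metis
    next
      case False
      then have v2: "v = w2 @ [x2]" using 2 by simp
      have "lcp a v = length v" using cl_child assms(3) c1 by metis
      then have "lcp a w2 = length w2 \<and> length w2 < length a \<and> a ! length w2 = x2"
        using lcp_snoc[of a w2 x2] v2 lcp_le1[of a w2] lcp_le2[of a w2] by (auto split: if_splits)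
      then show ?thesis using cl_par[of w2 x2] assms(4) v2 by simp
    qed
  next
    case c1: False
    then have v1: "v = w1 @ [x1]" using 1 by simp
    show ?thesis
    proof (cases "w2 = v @ [x2]")
      case True
      have "lcp a v = length v" using cl_child assms(4) True by metis
      then have "lcp a w1 = length w1 \<and> length w1 < length a \<and> a ! length w1 = x1"
        using lcp_snoc[of a w1 x1] v1 lcp_le1[of a w1] lcp_le2[of a w1] by (auto split: if_splits)
      then show ?thesis using cl_par[of w1 x1] assms(3) v1 by simp
    next
      case False
      then have v2: "v = w2 @ [x2]" using 2 by simp
      then show ?thesis using v1 by simp
    qed
  qed
qed

lemma closer_exists:
  assumes "bvert a" "bvert v" "a \<noteq> v"
  shows "\<exists>w. badj v w \<and> dl a w + 1 = dl a v"
proof (cases "lcp a v = length v")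
  case True
  then have vt: "v = take (length v) a" using lcp_eq_len by simp
  have lt: "length v < length a"
  proof (rule ccontr)
    assume "\<not> length v < length a"
    then have "take (length v) a = a" by simp
    then show False using vt assms(3) by simp
  qed
  define w where "w = v @ [a ! length v]"
  have "w = take (Suc (length v)) a" unfolding w_def using vt lt by (metis take_Suc_conv_app_nth)
  then have "bvert w" using bvert_take assms(1) by simp
  then have "badj v w" unfolding badj_def w_def using assms(2) by auto
  moreover have "dl a w + 1 = dl a v" unfolding w_def using dl_snoc[of a v] True lt by auto
  ultimately show ?thesis by blast
next
  case False
  then have "v \<noteq> []" by auto
  then obtain w y where v: "v = w @ [y]" by (metis append_butlast_last_id)
  have "bvert w" using assms(2) v bvert_snoc by simp
  then have "badj v w" unfolding badj_def using assms(2) v by auto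
  moreover have "\<not> (lcp a w = length w \<and> length w < length a \<and> a ! length w = y)"
    using False v lcp_snoc[of a w y] by auto
  then have "dl a w + 1 = dl a v" using v dl_snoc(1)[of a w y] by auto
  ultimately show ?thesis by blast
qed

lemma relpow_dl: "(badj ^^ n) u v \<Longrightarrow> dl u v \<le> n"
proof (induction n arbitrary: v)
  case 0
  then show ?case by simp
next
  case (Suc n)
  then obtain w where "(badj ^^ n) u w" "badj w v" by auto
  then show ?case using Suc.IH[of w] dl_adj[of w v u] by fastforce
qed

lemma dl_relpow: "bvert u \<Longrightarrow> bvert v \<Longrightarrow> (badj ^^ dl u v) u v"
proof (induction "dl u v" arbitrary: v)
  case 0
  then show ?case using dl_zero by simp
next
  case (Suc n)
  then have "u \<noteq> v" by auto
  then obtain w where w: "badj v w" "dl u w + 1 = dl u v" using closer_exists Suc.prems by blast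
  have "n = dl u w" using w Suc.hyps(2) by simp
  then have "(badj ^^ n) u w" using Suc.hyps(1)[of w] Suc.prems badj_vert[OF w(1)] by auto
  then show ?case using w Suc.hyps(2) badj_sym by (metis relpowp_Suc_I)
qed

lemma vdist_dl: "bvert u \<Longrightarrow> bvert v \<Longrightarrow> vdist u v = dl u v"
  unfolding vdist_def
  by (rule Least_equality) (auto intro: dl_relpow dest: relpow_dl)

definition nb :: "nat list \<Rightarrow> nat list set" where "nb v = {w. badj v w}"



lemma nb_Nil: "nb [] = {[0],[1],[2]}"
proof -
  have b: "bvert [x] \<longleftrightarrow> x \<in> {0,1,2}" for x using bvert_snoc[of "[]" x] by simp
  show ?thesis
  proof
    show "nb [] \<subseteq> {[0],[1],[2]}"
    proof
      fix u assume "u \<in> nb []"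
      then obtain x where "u = [x]" "bvert u" unfolding nb_def badj_def by auto
      then show "u \<in> {[0],[1],[2]}" using b by auto
    qed
    have "badj [] [x]" if "x \<in> {0,1,2}" for x unfolding badj_def using b[of x] that by auto
    then show "{[0],[1],[2]} \<subseteq> nb []" unfolding nb_def by auto
  qed
qed

lemma nb_three: assumes "bvert v" shows "\<exists>y1 y2 y3. distinct [y1,y2,y3] \<and> nb v = {y1,y2,y3}"
proof (cases "v = []")
  case True
  have "distinct [[0::nat],[1],[2]]" by simp
  then show ?thesis using nb_Nil True by blast
next
  case False
  then obtain w y where v: "v = w @ [y]" by (metis append_butlast_last_id)
  have y: "y \<in> {0,1,2}" "bvert w" "last v = y"
    using assms unfolding v bvert_snoc by auto
  obtain p q where pq: "\<And>x. (x \<in> {0,1,2} \<and> x \<noteq> y) \<longleftrightarrow> (x = p \<or> x = q)" "p \<noteq> q" "p \<noteq> y" "q \<noteq> y"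
  proof -
    have "y = 0 \<or> y = 1 \<or> y = 2" using y(1) by simp
    moreover have "y = 0 \<Longrightarrow> thesis"
    proof -
      assume yy: "y = 0"
      have "(x \<in> {0,1,2} \<and> x \<noteq> y) \<longleftrightarrow> (x = 1 \<or> x = 2)" for x :: nat using yy by auto
      then show thesis using that[of 1 2] yy by simp
    qed
    moreover have "y = 1 \<Longrightarrow> thesis"
    proof -
      assume yy: "y = 1"
      have "(x \<in> {0,1,2} \<and> x \<noteq> y) \<longleftrightarrow> (x = 0 \<or> x = 2)" for x :: nat using yy by auto
      then show thesis using that[of 0 2] yy by simp
    qed
    moreover have "y = 2 \<Longrightarrow> thesis"
    proof -
      assume yy: "y = 2"
      have "(x \<in> {0,1,2} \<and> x \<noteq> y) \<longleftrightarrow> (x = 0 \<or> x = 1)" for x :: nat using yy by auto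
      then show thesis using that[of 0 1] yy by simp
    qed
    ultimately show thesis by blast
  qed
  have ch: "bvert (v @ [x]) \<longleftrightarrow> x = p \<or> x = q" for x
    using bvert_snoc[of v x] assms y(3) pq(1)[of x] \<open>v \<noteq> []\<close> by auto
  have "nb v = {w, v@[p], v@[q]}"
  proof
    show "nb v \<subseteq> {w, v@[p], v@[q]}"
    proof
      fix u assume "u \<in> nb v"
      then obtain x where u: "bvert u" "u = v @ [x] \<or> v = u @ [x]" unfolding nb_def badj_def by auto
      show "u \<in> {w, v@[p], v@[q]}"
      proof (cases "u = v @ [x]")
        case True
        then show ?thesis using ch[of x] u by auto
      next
        case False
        then have "v = u @ [x]" using u by simp
        then have "u = w" using v by simp
        then show ?thesis by simp
      qed
    qed
    have "badj v w" unfolding badj_def using assms y v by auto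
    moreover have "badj v (v@[p])" "badj v (v@[q])" unfolding badj_def using assms ch by auto
    ultimately show "{w, v@[p], v@[q]} \<subseteq> nb v" unfolding nb_def by auto
  qed
  moreover have "distinct [w, v@[p], v@[q]]" using v pq(2) by auto
  ultimately show ?thesis by blast
qed

lemma nb_finite: "finite (nb v)"
proof -
  have "nb v \<subseteq> (\<lambda>x. v @ [x]) ` {0,1,2} \<union> {butlast v}"
  proof
    fix u assume "u \<in> nb v"
    then obtain x where "u = v @ [x] \<or> v = u @ [x]" "set u \<subseteq> {0,1,2}" unfolding nb_def badj_def bvert_def by auto
    then show "u \<in> (\<lambda>x. v @ [x]) ` {0,1,2} \<union> {butlast v}" by auto
  qed
  then show ?thesis by (rule finite_subset) auto
qed



definition md :: "nat \<Rightarrow> nat \<Rightarrow> nat \<Rightarrow> nat \<Rightarrow> nat" where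
  "md p q r s = (if (p = 0 \<and> s = 0) \<or> (q = 0 \<and> r = 0) then 0 else 1 + min (min p q) (min r s))"

definition ptt :: "nat \<Rightarrow> nat \<Rightarrow> nat \<Rightarrow> nat \<Rightarrow> nat \<Rightarrow> bool" where
  "ptt p q r s j = (if md p q r s = 0 then ((j=1 \<or> j=3) \<and> p=0 \<and> s=0) \<or> ((j=2 \<or> j=4) \<and> q=0 \<and> r=0)
     else (j=1 \<and> 1+min r s = md p q r s \<and> 1+min p r = md p q r s) \<or>
          (j=2 \<and> 1+min r s = md p q r s \<and> 1+min q s = md p q r s) \<or>
          (j=3 \<and> 1+min p q = md p q r s \<and> 1+min q s = md p q r s) \<or>
          (j=4 \<and> 1+min p q = md p q r s \<and> 1+min p r = md p q r s))"

definition ad1 :: "nat \<Rightarrow> nat \<Rightarrow> bool" where "ad1 x y \<longleftrightarrow> x = y + 1 \<or> y = x + 1"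

definition vt :: "nat \<Rightarrow> nat \<Rightarrow> nat \<Rightarrow> nat \<Rightarrow> bool" where
  "vt p q r s \<longleftrightarrow> ad1 p r \<and> ad1 q s \<and> ad1 p q \<and> ad1 r s \<and>
     (p = s \<and> q = r \<longrightarrow> (p = 0 \<and> s = 0) \<or> (q = 0 \<and> r = 0))"

lemma oedge_split: "is_oedge A \<Longrightarrow> badj (fst A) (snd A) \<and> bvert (fst A) \<and> bvert (snd A)"
  unfolding is_oedge_def using badj_vert by auto

lemma mdist_dl:
  assumes "badj a0 a1" "badj b0 b1"
  shows "mdist (a0,a1) (b0,b1) = md (dl a0 b0) (dl a0 b1) (dl a1 b0) (dl a1 b1)"
proof -
  have v: "bvert a0" "bvert a1" "bvert b0" "bvert b1" using assms badj_vert by auto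
  have S0: "{vdist x y | x y. x \<in> {a0, a1} \<and> y \<in> {b0, b1}} = {vdist a0 b0, vdist a0 b1, vdist a1 b0, vdist a1 b1}"
    by blast
  have S: "{vdist x y | x y. x \<in> {a0, a1} \<and> y \<in> {b0, b1}} = {dl a0 b0, dl a0 b1, dl a1 b0, dl a1 b1}"
    unfolding S0 using vdist_dl v by simp
  have M: "Min {dl a0 b0, dl a0 b1, dl a1 b0, dl a1 b1} = min (min (dl a0 b0) (dl a0 b1)) (min (dl a1 b0) (dl a1 b1))"
    by (simp add: min.assoc)
  have E: "{a0,a1} = {b0,b1} \<longleftrightarrow> (dl a0 b0 = 0 \<and> dl a1 b1 = 0) \<or> (dl a0 b1 = 0 \<and> dl a1 b0 = 0)"
    unfolding dl_zero doubleton_eq_iff by auto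
  show ?thesis unfolding mdist_def md_def fst_conv snd_conv S M E by simp
qed

lemma on_geod_dl:
  assumes "badj a0 a1" "badj b0 b1" "bvert v"
  shows "on_geod (a0,a1) (b0,b1) v \<longleftrightarrow>
     1 + min (dl a0 v) (dl a1 v) + min (dl b0 v) (dl b1 v) = mdist (a0,a1) (b0,b1)"
proof -
  have v: "bvert a0" "bvert a1" "bvert b0" "bvert b1" using assms badj_vert by auto
  show ?thesis unfolding on_geod_def mvdist_def fst_conv snd_conv
    using vdist_dl[OF v(1) assms(3)] vdist_dl[OF v(2) assms(3)] vdist_dl[OF v(3) assms(3)]
      vdist_dl[OF v(4) assms(3)]
    by (simp add: of_nat_add[symmetric] del: of_nat_add) (metis of_nat_Suc of_nat_eq_iff)
qed

lemma ptype_dl: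
  assumes "badj a0 a1" "badj b0 b1"
  shows "ptype (a0,a1) (b0,b1) j \<longleftrightarrow> ptt (dl a0 b0) (dl a0 b1) (dl a1 b0) (dl a1 b1) j"
proof -
  have v: "bvert a0" "bvert a1" "bvert b0" "bvert b1" using assms badj_vert by auto
  have d1: "dl a0 a1 = 1" "dl b0 b1 = 1" using assms dl_adj1 by auto
  note og = on_geod_dl[OF assms]
  have g1: "on_geod (a0,a1) (b0,b1) a1 \<longleftrightarrow> 1 + min (dl a1 b0) (dl a1 b1) = mdist (a0,a1) (b0,b1)"
    using og[OF v(2)] d1 dl_sym[of a1 b0] dl_sym[of a1 b1] dl_sym[of a0 a1] by simp
  have g0: "on_geod (a0,a1) (b0,b1) a0 \<longleftrightarrow> 1 + min (dl a0 b0) (dl a0 b1) = mdist (a0,a1) (b0,b1)"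
    using og[OF v(1)] d1 dl_sym[of a0 b0] dl_sym[of a0 b1] dl_sym[of a1 a0] by simp
  have h0: "on_geod (a0,a1) (b0,b1) b0 \<longleftrightarrow> 1 + min (dl a0 b0) (dl a1 b0) = mdist (a0,a1) (b0,b1)"
    using og[OF v(3)] d1 dl_sym[of b1 b0] by simp
  have h1: "on_geod (a0,a1) (b0,b1) b1 \<longleftrightarrow> 1 + min (dl a0 b1) (dl a1 b1) = mdist (a0,a1) (b0,b1)"
    using og[OF v(4)] d1 by simp
  have e1: "(b0,b1) = (a0,a1) \<longleftrightarrow> dl a0 b0 = 0 \<and> dl a1 b1 = 0" using dl_zero by auto
  have e2: "(b0,b1) = opp (a0,a1) \<longleftrightarrow> dl a0 b1 = 0 \<and> dl a1 b0 = 0" unfolding opp_def using dl_zero by auto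
  show ?thesis unfolding ptype_def ptt_def mdist_dl[OF assms, symmetric] fst_conv snd_conv g1 g0 h0 h1 e1 e2
    by (simp add: min.commute)
qed

lemma vt_dl:
  assumes "badj a0 a1" "badj b0 b1"
  shows "vt (dl a0 b0) (dl a0 b1) (dl a1 b0) (dl a1 b1)"
proof -
  have v: "bvert a0" "bvert a1" "bvert b0" "bvert b1" using assms badj_vert by auto
  have adjA: "ad1 (dl a0 x) (dl a1 x)" for x
    using dl_adj[OF assms(1), of x] dl_sym unfolding ad1_def by metis
  have adjB: "ad1 (dl x b0) (dl x b1)" for x
    using dl_adj[OF assms(2), of x] unfolding ad1_def by metis
  define p q r s where "p = dl a0 b0" "q = dl a0 b1" "r = dl a1 b0" "s = dl a1 b1"
  have ex: "(p = 0 \<and> s = 0) \<or> (q = 0 \<and> r = 0)" if E: "p = s" "q = r"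
  proof -
    have "q = p + 1 \<or> p = q + 1" using adjB[of a0] unfolding ad1_def p_q_r_s_def by auto
    then show ?thesis
    proof
      assume c: "q = p + 1"
      show ?thesis
      proof (cases "a0 = b0")
        case True
        then show ?thesis using E p_q_r_s_def dl_self by simp
      next
        case False
        obtain t where t: "badj b0 t" "dl a0 t + 1 = dl a0 b0"
          using closer_exists[OF v(1) v(3) False] by blast
        have "ad1 (dl t a0) (dl t a1)" using dl_adj[OF assms(1), of t] unfolding ad1_def by metis
        moreover have "ad1 (dl a1 b0) (dl a1 t)" using dl_adj[OF t(1), of a1] unfolding ad1_def by metis
        moreover have "dl t a0 = dl a0 t" "dl t a1 = dl a1 t" using dl_sym by auto
        ultimately have "dl a1 t = p" using t c E unfolding p_q_r_s_def ad1_def by linarith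
        then have "t = b1" using closer_unique[OF t(1) assms(2), of a1] c E p_q_r_s_def by simp
        then show ?thesis using t c p_q_r_s_def by simp
      qed
    next
      assume c: "p = q + 1"
      show ?thesis
      proof (cases "a1 = b0")
        case True
        then show ?thesis using E p_q_r_s_def dl_self by simp
      next
        case False
        obtain t where t: "badj b0 t" "dl a1 t + 1 = dl a1 b0"
          using closer_exists[OF v(2) v(3) False] by blast
        have "ad1 (dl t a0) (dl t a1)" using dl_adj[OF assms(1), of t] unfolding ad1_def by metis
        moreover have "ad1 (dl a0 b0) (dl a0 t)" using dl_adj[OF t(1), of a0] unfolding ad1_def by metis
        moreover have "dl t a0 = dl a0 t" "dl t a1 = dl a1 t" using dl_sym by auto
        ultimately have "dl a0 t = q" using t c E unfolding p_q_r_s_def ad1_def by linarith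
        then have "t = b1" using closer_unique[OF t(1) assms(2), of a0] c E p_q_r_s_def by simp
        then show ?thesis using t c E p_q_r_s_def by simp
      qed
    qed
  qed
  show ?thesis unfolding vt_def p_q_r_s_def[symmetric]
    using adjA[of b0] adjA[of b1] adjB[of a0] adjB[of a1] ex unfolding p_q_r_s_def by simp
qed



lemma vt_cases:
  assumes "vt p q r s"
  obtains (T1) m where "p = m+1" "q = m+2" "r = m" "s = m+1"
  | (T2) m where "p = m+2" "q = m+1" "r = m+1" "s = m"
  | (T3) m where "p = m+1" "q = m" "r = m+2" "s = m+1"
  | (T4) m where "p = m" "q = m+1" "r = m+1" "s = m+2"
  | (E1) "p = 0" "q = 1" "r = 1" "s = 0"
  | (E2) "p = 1" "q = 0" "r = 0" "s = 1"
proof -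
  have a: "p = r + 1 \<or> r = p + 1" "q = s + 1 \<or> s = q + 1" "p = q + 1 \<or> q = p + 1" "r = s + 1 \<or> s = r + 1"
    and e: "p = s \<and> q = r \<longrightarrow> (p = 0 \<and> s = 0) \<or> (q = 0 \<and> r = 0)"
    using assms unfolding vt_def ad1_def by auto
  show thesis
  proof (cases "r = p + 1")
    case c1: True
    show thesis
    proof (cases "q = p + 1")
      case c2: True
      then show thesis using a e c1 T4[of p] E1 by (cases "s = q + 1") auto
    next
      case c2: False
      then show thesis using a e c1 T3[of q] by auto
    qed
  next
    case c1: False
    show thesis
    proof (cases "q = p + 1")
      case c2: True
      then show thesis using a e c1 T1[of r] by auto
    next
      case c2: False
      then show thesis using a e c1 T2[of s] E2 by (cases "s = q + 1") auto
    qed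
  qed
qed



definition sw :: "nat \<Rightarrow> nat" where
  "sw j = (if j = 1 then 2 else if j = 2 then 1 else if j = 3 then 4 else 3)"

definition tab1 :: "nat \<Rightarrow> nat \<Rightarrow> nat \<times> nat" where
  "tab1 d j = (if d = 0 then (if j = 1 \<or> j = 3 then (1,3) else (1,2))
     else if j = 1 then (d-1,1) else if j = 2 then (d+1,2) else if j = 3 then (d+1,3) else (d-1,4))"

definition tab2 :: "nat \<Rightarrow> nat \<Rightarrow> nat \<times> nat" where
  "tab2 d j = (if d = 0 then (if j = 1 \<or> j = 3 then (1,3) else (1,2))
     else if j = 1 then (d,2) else if j = 2 then (d+1,2) else if j = 3 then (d+1,3) else (d,3))"

lemma sh1: "md (m+1) (m+2) m (m+1) = m+1" "ptt (m+1) (m+2) m (m+1) j \<longleftrightarrow> j = 1"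
  unfolding ptt_def md_def by (auto simp: min_def)
lemma sh2: "md (m+2) (m+1) (m+1) m = m+1" "ptt (m+2) (m+1) (m+1) m j \<longleftrightarrow> j = 2"
  unfolding ptt_def md_def by (auto simp: min_def)
lemma sh3: "md (m+1) m (m+2) (m+1) = m+1" "ptt (m+1) m (m+2) (m+1) j \<longleftrightarrow> j = 3"
  unfolding ptt_def md_def by (auto simp: min_def)
lemma sh4: "md m (m+1) (m+1) (m+2) = m+1" "ptt m (m+1) (m+1) (m+2) j \<longleftrightarrow> j = 4"
  unfolding ptt_def md_def by (auto simp: min_def)
lemma she1: "md 0 1 1 0 = 0" "ptt 0 1 1 0 j \<longleftrightarrow> j = 1 \<or> j = 3"
  unfolding ptt_def md_def by auto
lemma she2: "md 1 0 0 1 = 0" "ptt 1 0 0 1 j \<longleftrightarrow> j = 2 \<or> j = 4"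
  unfolding ptt_def md_def by auto



lemma she1': "md 0 (Suc 0) (Suc 0) 0 = 0" "ptt 0 (Suc 0) (Suc 0) 0 j \<longleftrightarrow> j = 1 \<or> j = 3"
  using she1 by simp_all
lemma she2': "md (Suc 0) 0 0 (Suc 0) = 0" "ptt (Suc 0) 0 0 (Suc 0) j \<longleftrightarrow> j = 2 \<or> j = 4"
  using she2 by simp_all

lemmas shs = sh1[simplified] sh2[simplified] sh3[simplified] sh4[simplified] she1 she2 she1' she2'

lemma core_sw:
  assumes "vt p q r s" "ptt p q r s j"
  shows "md q p s r = md p q r s \<and> ptt q p s r (sw j)"
  using assms(2) by (cases rule: vt_cases[OF assms(1)]) (auto simp: shs sw_def)

lemma core_base:
  assumes "vt p q r s" "ptt p q r s j"
  shows "(p = 0 \<and> s = 0) \<longleftrightarrow> (md p q r s = 0 \<and> (j = 1 \<or> j = 3))"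
  using assms(2) by (cases rule: vt_cases[OF assms(1)]) (auto simp: shs)

lemma core_j: "ptt p q r s j \<Longrightarrow> j \<in> {1,2,3,4}"
  unfolding ptt_def by (auto split: if_splits)

lemma core1:
  assumes "vt p q r s" "ptt p q r s j" "vt g p h r"
    "if r > p then (if s < r then h = r+1 else h+1 = r) else (if q < p then g = p+1 else g+1 = p)"
  shows "md g p h r = fst (tab1 (md p q r s) j) \<and> ptt g p h r (snd (tab1 (md p q r s) j))"
  using assms(2,4) by (cases rule: vt_cases[OF assms(1)]; cases rule: vt_cases[OF assms(3)]) (auto simp: shs tab1_def)

lemma core2:
  assumes "vt p q r s" "ptt p q r s j" "vt g p h r"
    "if r > p then h = r+1 else g = p+1"
  shows "md g p h r = fst (tab2 (md p q r s) j) \<and> ptt g p h r (snd (tab2 (md p q r s) j))"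
  using assms(2,4) by (cases rule: vt_cases[OF assms(1)]; cases rule: vt_cases[OF assms(3)]) (auto simp: shs tab2_def)



lemma three_split:
  assumes "distinct [y1,y2,y3]" "S = {y1,y2,y3}" "b \<in> S" "c \<in> S" "c \<noteq> b"
  shows "\<exists>v. distinct [b,c,v] \<and> S = {b,c,v}"
  using assms by auto

lemma nb_toward:
  assumes "bvert a" "badj b0 b1" "a \<noteq> b0"
  shows "\<exists>x1 x2. distinct [b1,x1,x2] \<and> nb b0 = {b1,x1,x2} \<and> dl a x2 = dl a b0 + 1 \<and>
     (if dl a b1 < dl a b0 then dl a x1 = dl a b0 + 1 else dl a x1 + 1 = dl a b0)"
proof -
  have vb: "bvert b0" using assms badj_vert by auto
  obtain y1 y2 y3 where Y: "distinct [y1,y2,y3]" "nb b0 = {y1,y2,y3}" using nb_three[OF vb] by blast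
  obtain t where t: "badj b0 t" "dl a t + 1 = dl a b0" using closer_exists[OF assms(1) vb assms(3)] by blast
  have far: "dl a y = dl a b0 + 1" if "y \<in> nb b0" "y \<noteq> t" for y
  proof -
    have "badj b0 y" using that nb_def by auto
    then have "dl a y = dl a b0 + 1 \<or> dl a b0 = dl a y + 1" using dl_adj by blast
    moreover have "\<not> dl a y < dl a b0" using closer_unique[OF t(1) \<open>badj b0 y\<close>, of a] t that by auto
    ultimately show ?thesis by auto
  qed
  have b1in: "b1 \<in> nb b0" "t \<in> nb b0" using assms(2) t(1) nb_def by auto
  show ?thesis
  proof (cases "dl a b1 < dl a b0")
    case True
    then have "b1 = t" using far[OF b1in(1)] by force
    obtain c where c: "c \<in> nb b0" "c \<noteq> b1"
    proof -
      have "y1 \<noteq> b1 \<or> y2 \<noteq> b1" using Y(1) by auto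
      then show thesis using that Y(2) by auto
    qed
    obtain v where uv0: "distinct [b1,c,v]" "nb b0 = {b1,c,v}"
      using three_split[OF Y b1in(1) c(1) c(2)] by blast
    obtain u where uv: "distinct [b1,u,v]" "nb b0 = {b1,u,v}" using uv0 by blast
    then have "dl a u = dl a b0 + 1" "dl a v = dl a b0 + 1" using far \<open>b1 = t\<close> by auto
    then show ?thesis using uv True by (intro exI[of _ u] exI[of _ v]) auto
  next
    case False
    then have "t \<noteq> b1" using t by auto
    obtain v where v: "distinct [b1,t,v]" "nb b0 = {b1,t,v}"
      using three_split[OF Y b1in(1) b1in(2) \<open>t \<noteq> b1\<close>] by blast
    then have "dl a v = dl a b0 + 1" using far by auto
    then show ?thesis using v t False by (intro exI[of _ t] exI[of _ v]) auto
  qed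
qed

lemma geo_pred:
  assumes A: "badj a0 a1" and B: "badj b0 b1" and P: "ptype (a0,a1) (b0,b1) j"
  shows "\<exists>x1 x2. distinct [b1,x1,x2] \<and> nb b0 = {b1,x1,x2} \<and> badj x1 b0 \<and> badj x2 b0 \<and>
    mdist (a0,a1) (x1,b0) = fst (tab1 (mdist (a0,a1) (b0,b1)) j) \<and>
    ptype (a0,a1) (x1,b0) (snd (tab1 (mdist (a0,a1) (b0,b1)) j)) \<and>
    mdist (a0,a1) (x2,b0) = fst (tab2 (mdist (a0,a1) (b0,b1)) j) \<and>
    ptype (a0,a1) (x2,b0) (snd (tab2 (mdist (a0,a1) (b0,b1)) j))"
proof -
  define p q r s where "p = dl a0 b0" "q = dl a0 b1" "r = dl a1 b0" "s = dl a1 b1"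
  have V: "vt p q r s" using vt_dl[OF A B] p_q_r_s_def by simp
  have PT: "ptt p q r s j" using P ptype_dl[OF A B] p_q_r_s_def by simp
  have MD: "mdist (a0,a1) (b0,b1) = md p q r s" using mdist_dl[OF A B] p_q_r_s_def by simp
  have va: "bvert a0" "bvert a1" using A badj_vert by auto
  define a where "a = (if r > p then a1 else a0)"
  have "ad1 p r" using V vt_def by simp
  then have ane: "a \<noteq> b0" unfolding a_def p_q_r_s_def ad1_def by (auto simp: dl_self)
  have "bvert a" using va a_def by simp
  obtain x1 x2 where X: "distinct [b1,x1,x2]" "nb b0 = {b1,x1,x2}" "dl a x2 = dl a b0 + 1"
     "if dl a b1 < dl a b0 then dl a x1 = dl a b0 + 1 else dl a x1 + 1 = dl a b0"
    using nb_toward[OF \<open>bvert a\<close> B ane] by blast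
  have adj: "badj x1 b0" "badj x2 b0" using X(2) nb_def badj_sym by auto
  have I1: "if r > p then (if s < r then dl a1 x1 = r+1 else dl a1 x1+1 = r)
     else (if q < p then dl a0 x1 = p+1 else dl a0 x1+1 = p)"
    using X(4) unfolding a_def p_q_r_s_def by (auto split: if_splits)
  have I2: "if r > p then dl a1 x2 = r+1 else dl a0 x2 = p+1"
    using X(3) unfolding a_def p_q_r_s_def by (auto split: if_splits)
  have V1: "vt (dl a0 x1) p (dl a1 x1) r" using vt_dl[OF A adj(1)] p_q_r_s_def by simp
  have V2: "vt (dl a0 x2) p (dl a1 x2) r" using vt_dl[OF A adj(2)] p_q_r_s_def by simp
  have C1: "md (dl a0 x1) p (dl a1 x1) r = fst (tab1 (md p q r s) j) \<and> ptt (dl a0 x1) p (dl a1 x1) r (snd (tab1 (md p q r s) j))"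
    by (rule core1[OF V PT V1 I1])
  have C2: "md (dl a0 x2) p (dl a1 x2) r = fst (tab2 (md p q r s) j) \<and> ptt (dl a0 x2) p (dl a1 x2) r (snd (tab2 (md p q r s) j))"
    by (rule core2[OF V PT V2 I2])
  show ?thesis
    apply (rule exI[of _ x1], rule exI[of _ x2])
    using X(1,2) adj C1 C2 MD mdist_dl[OF A adj(1)] mdist_dl[OF A adj(2)] ptype_dl[OF A adj(1)] ptype_dl[OF A adj(2)]
    unfolding p_q_r_s_def by simp
qed

lemma geo_opp:
  assumes A: "badj a0 a1" and B: "badj b0 b1" and P: "ptype (a0,a1) (b0,b1) j"
  shows "mdist (a0,a1) (b1,b0) = mdist (a0,a1) (b0,b1) \<and> ptype (a0,a1) (b1,b0) (sw j)"
proof -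
  have B': "badj b1 b0" using B badj_sym by auto
  have V: "vt (dl a0 b0) (dl a0 b1) (dl a1 b0) (dl a1 b1)" using vt_dl[OF A B] .
  have PT: "ptt (dl a0 b0) (dl a0 b1) (dl a1 b0) (dl a1 b1) j" using P ptype_dl[OF A B] by simp
  show ?thesis using core_sw[OF V PT] mdist_dl[OF A B] mdist_dl[OF A B'] ptype_dl[OF A B'] by simp
qed

lemma geo_base:
  assumes A: "badj a0 a1" and B: "badj b0 b1" and P: "ptype (a0,a1) (b0,b1) j"
  shows "((b0,b1) = (a0,a1)) \<longleftrightarrow> (mdist (a0,a1) (b0,b1) = 0 \<and> (j = 1 \<or> j = 3))"
proof -
  have V: "vt (dl a0 b0) (dl a0 b1) (dl a1 b0) (dl a1 b1)" using vt_dl[OF A B] .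
  have PT: "ptt (dl a0 b0) (dl a0 b1) (dl a1 b0) (dl a1 b1) j" using P ptype_dl[OF A B] by simp
  have e: "((b0,b1) = (a0,a1)) \<longleftrightarrow> dl a0 b0 = 0 \<and> dl a1 b1 = 0" using dl_zero[of a0 b0] dl_zero[of a1 b1] by auto
  show ?thesis unfolding e using core_base[OF V PT] mdist_dl[OF A B] by simp
qed

lemma geo_j: "badj a0 a1 \<Longrightarrow> badj b0 b1 \<Longrightarrow> ptype (a0,a1) (b0,b1) j \<Longrightarrow> j \<in> {1,2,3,4}"
  using ptype_dl[of a0 a1 b0 b1 j] core_j[of "dl a0 b0" "dl a0 b1" "dl a1 b0" "dl a1 b1" j] by simp



lemma is_path_len: "is_path k A B cs \<Longrightarrow> length cs = Suc k"
  unfolding is_path_def by simp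

lemma is_path_snoc:
  assumes "length cs = Suc k"
  shows "is_path (Suc k) A B (cs @ [B']) \<longleftrightarrow>
    is_path k A (cs ! k) cs \<and> is_oedge B' \<and> follows (cs ! k) B' \<and> B' = B"
proof -
  have n1: "(cs @ [B']) ! i = cs ! i" if "i \<le> k" for i using that assms by (simp add: nth_append)
  have n2: "(cs @ [B']) ! Suc k = B'" using assms by (simp add: nth_append)
  have f: "(\<forall>i < Suc k. follows ((cs @ [B']) ! i) ((cs @ [B']) ! Suc i)) \<longleftrightarrow>
     (\<forall>i < k. follows (cs ! i) (cs ! Suc i)) \<and> follows (cs ! k) B'"
  proof
    assume H: "\<forall>i < Suc k. follows ((cs @ [B']) ! i) ((cs @ [B']) ! Suc i)"
    have "follows (cs ! i) (cs ! Suc i)" if "i < k" for i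
      using H[rule_format, of i] that n1[of i] n1[of "Suc i"] by simp
    moreover have "follows (cs ! k) B'" using H[rule_format, of k] n1[of k] n2 by simp
    ultimately show "(\<forall>i < k. follows (cs ! i) (cs ! Suc i)) \<and> follows (cs ! k) B'" by blast
  next
    assume H: "(\<forall>i < k. follows (cs ! i) (cs ! Suc i)) \<and> follows (cs ! k) B'"
    show "\<forall>i < Suc k. follows ((cs @ [B']) ! i) ((cs @ [B']) ! Suc i)"
    proof (intro allI impI)
      fix i assume "i < Suc k"
      then show "follows ((cs @ [B']) ! i) ((cs @ [B']) ! Suc i)"
        using H n1[of i] n1[of "Suc i"] n2 by (cases "i = k") auto
    qed
  qed
  have z: "(cs @ [B']) ! 0 = cs ! 0" using n1[of 0] by simp
  show ?thesis unfolding is_path_def using assms f n2 z by auto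
qed

lemma is_path_Suc_split:
  assumes "is_path (Suc k) A B ds"
  shows "\<exists>cs. ds = cs @ [B] \<and> length cs = Suc k"
proof -
  have l: "length ds = Suc (Suc k)" "ds ! Suc k = B" using assms unfolding is_path_def by auto
  then have "ds \<noteq> []" by auto
  then have "ds = butlast ds @ [last ds]" by simp
  moreover have "last ds = B" using l last_conv_nth[OF \<open>ds \<noteq> []\<close>] by simp
  ultimately show ?thesis using l by (intro exI[of _ "butlast ds"]) auto
qed

lemma inversions_snoc:
  assumes "length cs = Suc k"
  shows "inversions (Suc k) (cs @ [B]) = inversions k cs + (if B = opp (cs ! k) then 1 else 0)"
proof -
  have n1: "(cs @ [B]) ! i = cs ! i" if "i \<le> k" for i using that assms by (simp add: nth_append)
  have n2: "(cs @ [B]) ! Suc k = B" using assms by (simp add: nth_append)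
  have S: "{i. i < Suc k \<and> (cs @ [B]) ! Suc i = opp ((cs @ [B]) ! i)} =
     {i. i < k \<and> cs ! Suc i = opp (cs ! i)} \<union> (if B = opp (cs ! k) then {k} else {})"
    (is "?L = ?R")
  proof
    show "?L \<subseteq> ?R"
    proof
      fix i assume "i \<in> ?L"
      then show "i \<in> ?R" using n1[of i] n1[of "Suc i"] n2 by (cases "i = k") auto
    qed
    show "?R \<subseteq> ?L"
    proof
      fix i assume "i \<in> ?R"
      then show "i \<in> ?L" using n1[of i] n1[of "Suc i"] n2 by (cases "i = k") (auto split: if_splits)
    qed
  qed
  show ?thesis unfolding inversions_def S by (auto simp: card_insert_if)
qed

lemma paths_finite: "finite {cs. is_path k A C cs}"
proof (induction k arbitrary: C)
  case 0
  have "{cs. is_path 0 A C cs} \<subseteq> {[A]}"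
    unfolding is_path_def by (auto simp: length_Suc_conv)
  then show ?case by (rule finite_subset) auto
next
  case (Suc k)
  have "{cs. is_path (Suc k) A C cs} \<subseteq> (\<lambda>cs. cs @ [C]) ` (\<Union>x\<in>nb (fst C). {cs. is_path k A (x, fst C) cs})"
  proof
    fix ds assume "ds \<in> {cs. is_path (Suc k) A C cs}"
    then have P: "is_path (Suc k) A C ds" by simp
    then obtain cs where cs: "ds = cs @ [C]" "length cs = Suc k" using is_path_Suc_split by blast
    then have P2: "is_path k A (cs ! k) cs" "is_oedge C" "follows (cs ! k) C" using is_path_snoc P by auto
    have "cs ! k \<in> set cs" using cs(2) by simp
    then have "is_oedge (cs ! k)" using P2(1) unfolding is_path_def by auto
    then have "badj (fst (cs ! k)) (fst C)" using P2(3) unfolding is_oedge_def follows_def by simp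
    then have "fst (cs ! k) \<in> nb (fst C)" using badj_sym nb_def by auto
    moreover have "cs ! k = (fst (cs ! k), fst C)" using P2(3) unfolding follows_def by (metis prod.collapse)
    ultimately show "ds \<in> (\<lambda>cs. cs @ [C]) ` (\<Union>x\<in>nb (fst C). {cs. is_path k A (x, fst C) cs})"
      using cs P2(1) by (metis (mono_tags, lifting) UN_iff image_eqI mem_Collect_eq)
  qed
  moreover have "finite ((\<lambda>cs. cs @ [C]) ` (\<Union>x\<in>nb (fst C). {cs. is_path k A (x, fst C) cs}))"
    using Suc.IH nb_finite by auto
  ultimately show ?case by (rule finite_subset)
qed



definition PS :: "nat \<Rightarrow> oedge \<Rightarrow> oedge \<Rightarrow> nat \<Rightarrow> nat \<Rightarrow> oedge list set" where
  "PS k A C e r = {cs. is_path k A C cs \<and> inversions k cs + e = r}"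

lemma PS_finite: "finite (PS k A C e r)"
  unfolding PS_def by (rule finite_subset[OF _ paths_finite[of k A C]]) auto

lemma paths_decomp:
  assumes B: "badj b0 b1"
  shows "{ds. is_path (Suc k) A (b0,b1) ds \<and> inversions (Suc k) ds = r} =
    (\<Union>x\<in>nb b0. (\<lambda>cs. cs @ [(b0,b1)]) ` PS k A (x,b0) (if x = b1 then 1 else 0) r)"
  (is "?L = ?R")
proof
  show "?L \<subseteq> ?R"
  proof
    fix ds assume "ds \<in> ?L"
    then have P: "is_path (Suc k) A (b0,b1) ds" and I: "inversions (Suc k) ds = r" by auto
    then obtain cs where cs: "ds = cs @ [(b0,b1)]" "length cs = Suc k" using is_path_Suc_split by blast
    then have P2: "is_path k A (cs ! k) cs" "follows (cs ! k) (b0,b1)" using is_path_snoc P by auto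
    have "cs ! k \<in> set cs" using cs(2) by simp
    then have "is_oedge (cs ! k)" using P2(1) unfolding is_path_def by auto
    then have "badj (fst (cs ! k)) b0" using P2(2) unfolding is_oedge_def follows_def by simp
    then have xin: "fst (cs ! k) \<in> nb b0" using badj_sym nb_def by auto
    have ck: "cs ! k = (fst (cs ! k), b0)" using P2(2) unfolding follows_def by (metis prod.collapse snd_conv fst_conv)
    have "(b0,b1) = opp (cs ! k) \<longleftrightarrow> fst (cs ! k) = b1" using ck unfolding opp_def by (metis fst_conv snd_conv prod.inject)
    then have "inversions k cs + (if fst (cs ! k) = b1 then 1 else 0) = r"
      using I inversions_snoc[OF cs(2)] cs(1) by simp
    then have "cs \<in> PS k A (fst (cs ! k), b0) (if fst (cs ! k) = b1 then 1 else 0) r"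
      unfolding PS_def using P2(1) ck by simp
    then show "ds \<in> ?R" using xin cs(1) by blast
  qed
  show "?R \<subseteq> ?L"
  proof
    fix ds assume "ds \<in> ?R"
    then obtain x cs where x: "x \<in> nb b0" and cs: "cs \<in> PS k A (x,b0) (if x = b1 then 1 else 0) r"
      and ds: "ds = cs @ [(b0,b1)]" by blast
    then have P: "is_path k A (x,b0) cs" "inversions k cs + (if x = b1 then 1 else 0) = r"
      unfolding PS_def by auto
    have l: "length cs = Suc k" using P(1) is_path_len by blast
    have ck: "cs ! k = (x,b0)" using P(1) unfolding is_path_def by simp
    have "is_oedge (b0,b1)" using B unfolding is_oedge_def by simp
    then have "is_path (Suc k) A (b0,b1) ds" using is_path_snoc[OF l] P(1) ck ds unfolding follows_def by simp
    moreover have "(b0,b1) = opp (cs ! k) \<longleftrightarrow> x = b1" using ck unfolding opp_def by auto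
    then have "inversions (Suc k) ds = r" using inversions_snoc[OF l] ds P(2) by simp
    ultimately show "ds \<in> ?L" by simp
  qed
qed

lemma npaths_step:
  assumes B: "badj b0 b1" and X: "distinct [b1,x1,x2]" "nb b0 = {b1,x1,x2}"
  shows "npaths (Suc k) r A (b0,b1) = card (PS k A (b1,b0) 1 r) + npaths k r A (x1,b0) + npaths k r A (x2,b0)"
proof -
  let ?f = "\<lambda>cs. cs @ [(b0,b1)]"
  let ?S = "\<lambda>x. ?f ` PS k A (x,b0) (if x = b1 then 1 else 0) r"
  have inj: "inj_on ?f X" for X by (rule inj_onI) simp
  have disj: "?S x \<inter> ?S y = {}" if "x \<noteq> y" for x y
  proof (rule ccontr)
    assume "?S x \<inter> ?S y \<noteq> {}"
    then obtain c1 c2 where c: "c1 \<in> PS k A (x,b0) (if x = b1 then 1 else 0) r"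
      "c2 \<in> PS k A (y,b0) (if y = b1 then 1 else 0) r" "?f c1 = ?f c2" by blast
    then have "c1 = c2" by simp
    moreover have "c1 ! k = (x,b0)" "c2 ! k = (y,b0)" using c(1,2) unfolding PS_def is_path_def by auto
    ultimately show False using that by simp
  qed
  have "npaths (Suc k) r A (b0,b1) = card (\<Union>x\<in>nb b0. ?S x)"
    unfolding npaths_def paths_decomp[OF B] ..
  also have "\<dots> = (\<Sum>x\<in>nb b0. card (?S x))"
  proof (rule card_UN_disjoint)
    show "finite (nb b0)" by (rule nb_finite)
    show "\<forall>i\<in>nb b0. finite (?S i)" using PS_finite by blast
    show "\<forall>i\<in>nb b0. \<forall>j\<in>nb b0. i \<noteq> j \<longrightarrow> ?S i \<inter> ?S j = {}" using disj by blast
  qed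
  also have "\<dots> = (\<Sum>x\<in>nb b0. card (PS k A (x,b0) (if x = b1 then 1 else 0) r))"
    by (rule sum.cong) (auto simp: card_image[OF inj])
  also have "\<dots> = card (PS k A (b1,b0) 1 r) + card (PS k A (x1,b0) 0 r) + card (PS k A (x2,b0) 0 r)"
  proof -
    have d: "b1 \<noteq> x1" "b1 \<noteq> x2" "x1 \<noteq> x2" using X(1) by auto
    show ?thesis unfolding X(2) using d by (simp add: add.assoc)
  qed
  also have "\<dots> = card (PS k A (b1,b0) 1 r) + npaths k r A (x1,b0) + npaths k r A (x2,b0)"
    unfolding npaths_def PS_def by simp
  finally show ?thesis .
qed

lemma PS_one: "card (PS k A C 1 r) = (if r = 0 then 0 else npaths k (r - 1) A C)"
  unfolding PS_def npaths_def by (cases r) auto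

lemma npaths_0: "npaths 0 r A B = (if A = B \<and> r = 0 \<and> is_oedge A then 1 else 0)"
proof -
  have "{cs. is_path 0 A B cs \<and> inversions 0 cs = r} = (if A = B \<and> r = 0 \<and> is_oedge A then {[A]} else {})"
    unfolding is_path_def inversions_def by (auto simp: length_Suc_conv)
  then show ?thesis unfolding npaths_def by simp
qed



fun F :: "nat \<Rightarrow> int \<Rightarrow> nat \<Rightarrow> nat \<Rightarrow> nat" where
  "F 0 r d j = (if r = 0 \<and> d = 0 \<and> (j = 1 \<or> j = 3) then 1 else 0)"
| "F (Suc k) r d j = F k (r - 1) d (sw j) + F k r (fst (tab1 d j)) (snd (tab1 d j))
     + F k r (fst (tab2 d j)) (snd (tab2 d j))"

lemma F_zero: "r < 0 \<or> r > int k \<or> d > k \<Longrightarrow> F k r d j = 0"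
proof (induction k arbitrary: r d j)
  case 0
  then show ?case by auto
next
  case (Suc k)
  have t: "d > Suc k \<Longrightarrow> fst (tab1 d j) > k \<and> fst (tab2 d j) > k"
    unfolding tab1_def tab2_def by auto
  show ?case using Suc.prems Suc.IH t by (auto simp del: F.simps(1))
qed

lemma main_count:
  "is_oedge A \<Longrightarrow> is_oedge B \<Longrightarrow> ptype A B j \<Longrightarrow> npaths k r A B = F k (int r) (mdist A B) j"
proof (induction k arbitrary: B j r)
  case 0
  obtain a0 a1 b0 b1 where ab: "A = (a0,a1)" "B = (b0,b1)" by (cases A, cases B) auto
  have adj: "badj a0 a1" "badj b0 b1" using 0 ab unfolding is_oedge_def by auto
  show ?case using geo_base[OF adj] 0(1,3) ab npaths_0 by auto
next
  case (Suc k)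
  obtain a0 a1 b0 b1 where ab: "A = (a0,a1)" "B = (b0,b1)" by (cases A, cases B) auto
  have adj: "badj a0 a1" "badj b0 b1" using Suc.prems ab unfolding is_oedge_def by auto
  have P: "ptype (a0,a1) (b0,b1) j" using Suc.prems ab by simp
  define d where "d = mdist (a0,a1) (b0,b1)"
  obtain x1 x2 where X: "distinct [b1,x1,x2]" "nb b0 = {b1,x1,x2}" "badj x1 b0" "badj x2 b0"
    "mdist (a0,a1) (x1,b0) = fst (tab1 d j)" "ptype (a0,a1) (x1,b0) (snd (tab1 d j))"
    "mdist (a0,a1) (x2,b0) = fst (tab2 d j)" "ptype (a0,a1) (x2,b0) (snd (tab2 d j))"
    using geo_pred[OF adj P] d_def by blast
  have O: "mdist (a0,a1) (b1,b0) = d" "ptype (a0,a1) (b1,b0) (sw j)" using geo_opp[OF adj P] d_def by auto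
  have oe: "is_oedge (x1,b0)" "is_oedge (x2,b0)" "is_oedge (b1,b0)"
    using X(3,4) adj(2) badj_sym unfolding is_oedge_def by auto
  have s: "npaths (Suc k) r A B = card (PS k A (b1,b0) 1 r) + npaths k r A (x1,b0) + npaths k r A (x2,b0)"
    using npaths_step[OF adj(2) X(1,2)] ab by simp
  have t1: "npaths k r A (x1,b0) = F k (int r) (fst (tab1 d j)) (snd (tab1 d j))"
    using Suc.IH[OF Suc.prems(1) oe(1)] X(5,6) ab by simp
  have t2: "npaths k r A (x2,b0) = F k (int r) (fst (tab2 d j)) (snd (tab2 d j))"
    using Suc.IH[OF Suc.prems(1) oe(2)] X(7,8) ab by simp
  have t0: "card (PS k A (b1,b0) 1 r) = F k (int r - 1) d (sw j)"
  proof (cases "r = 0")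
    case True
    then show ?thesis using PS_one F_zero by simp
  next
    case False
    then have "int (r - 1) = int r - 1" by simp
    then show ?thesis using PS_one False Suc.IH[OF Suc.prems(1) oe(3)] O ab by simp
  qed
  show ?case using s t0 t1 t2 ab d_def by simp
qed

definition vv :: "nat \<Rightarrow> nat list" where "vv i = map (\<lambda>t. t mod 2) [0..<i]"

lemma vv_bvert: "bvert (vv i)"
  unfolding bvert_def vv_def by (auto; presburger)

lemma vv_Suc: "vv (Suc i) = vv i @ [i mod 2]"
  unfolding vv_def by simp

lemma vv_adj: "badj (vv i) (vv (Suc i))"
proof -
  have "bvert (vv i)" "bvert (vv (Suc i))" by (rule vv_bvert)+
  then show ?thesis unfolding badj_def using vv_Suc[of i] by blast
qed

lemma vv_prefix: "i \<le> j \<Longrightarrow> \<exists>w. vv j = vv i @ w"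
proof (induction j)
  case 0 then show ?case by simp
next
  case (Suc j)
  then show ?case
  proof (cases "i = Suc j")
    case False
    then obtain w where "vv j = vv i @ w" using Suc by auto
    then show ?thesis using vv_Suc by (intro exI[of _ "w @ [j mod 2]"]) simp
  qed simp
qed

lemma vv_len: "length (vv i) = i" unfolding vv_def by simp

lemma vv_dl: "dl (vv i) (vv j) = (if i \<le> j then j - i else i - j)"
proof (cases "i \<le> j")
  case True
  then obtain w where "vv j = vv i @ w" using vv_prefix by blast
  moreover have "length (vv j) = length (vv i) + length w" using calculation by simp
  moreover have "length w = j - i" using calculation(2) vv_len[of i] vv_len[of j] by simp
  ultimately show ?thesis using True unfolding dl_def by (simp add: lcp_app vv_len)
next
  case False
  then obtain w where "vv i = vv j @ w" using vv_prefix[of j i] by auto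
  moreover have "length (vv i) = length (vv j) + length w" using calculation by simp
  moreover have "length w = i - j" using calculation(2) vv_len[of i] vv_len[of j] by simp
  ultimately show ?thesis using False unfolding dl_def by (simp add: lcp_app vv_len lcp_sym[of "vv j @ w"])
qed

lemma ex_pair:
  assumes "j \<in> {1,2,3,4}"
  shows "\<exists>A B. is_oedge A \<and> is_oedge B \<and> mdist A B = d \<and> ptype A B j"
proof (cases d)
  case 0
  have a: "badj (vv 0) (vv 1)" "badj (vv 1) (vv 0)" using vv_adj[of 0] badj_sym by auto
  have e1: "vt 0 1 1 0" unfolding vt_def ad1_def by simp
  have e2: "vt 1 0 0 1" unfolding vt_def ad1_def by simp
  show ?thesis
  proof (cases "j = 1 \<or> j = 3")
    case True
    have "mdist (vv 0, vv 1) (vv 0, vv 1) = 0" "ptype (vv 0, vv 1) (vv 0, vv 1) j"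
      using mdist_dl[OF a(1) a(1)] ptype_dl[OF a(1) a(1)] vv_dl she1 True by simp_all
    then show ?thesis using a 0 unfolding is_oedge_def by (intro exI[of _ "(vv 0, vv 1)"]) auto
  next
    case False
    then have j: "j = 2 \<or> j = 4" using assms by auto
    have "mdist (vv 0, vv 1) (vv 1, vv 0) = 0" "ptype (vv 0, vv 1) (vv 1, vv 0) j"
      using mdist_dl[OF a(1) a(2)] ptype_dl[OF a(1) a(2)] vv_dl she2 j by simp_all
    then show ?thesis using a 0 unfolding is_oedge_def by (intro exI[of _ "(vv 0, vv 1)"] exI[of _ "(vv 1, vv 0)"]) auto
  qed
next
  case (Suc m)
  have a: "badj (vv 0) (vv 1)" "badj (vv 1) (vv 0)" using vv_adj[of 0] badj_sym by auto
  have b: "badj (vv d) (vv (Suc d))" "badj (vv (Suc d)) (vv d)" using vv_adj[of d] badj_sym by auto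
  have D: "dl (vv 0) (vv d) = m+1" "dl (vv 0) (vv (Suc d)) = m+2" "dl (vv 1) (vv d) = m" "dl (vv 1) (vv (Suc d)) = m+1"
    using vv_dl Suc by auto
  have oe: "is_oedge (vv 0, vv 1)" "is_oedge (vv 1, vv 0)" "is_oedge (vv d, vv (Suc d))" "is_oedge (vv (Suc d), vv d)"
    using a b unfolding is_oedge_def by auto
  have "j = 1 \<or> j = 2 \<or> j = 3 \<or> j = 4" using assms by auto
  then show ?thesis
  proof (elim disjE)
    assume j: "j = 1"
    have "mdist (vv 0, vv 1) (vv d, vv (Suc d)) = d \<and> ptype (vv 0, vv 1) (vv d, vv (Suc d)) j"
      using mdist_dl[OF a(1) b(1)] ptype_dl[OF a(1) b(1)] D sh1[of m] j Suc by simp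
    then show ?thesis using oe by blast
  next
    assume j: "j = 2"
    have "mdist (vv 0, vv 1) (vv (Suc d), vv d) = d \<and> ptype (vv 0, vv 1) (vv (Suc d), vv d) j"
      using mdist_dl[OF a(1) b(2)] ptype_dl[OF a(1) b(2)] D sh2[of m] j Suc by simp
    then show ?thesis using oe by blast
  next
    assume j: "j = 3"
    have "mdist (vv 1, vv 0) (vv (Suc d), vv d) = d \<and> ptype (vv 1, vv 0) (vv (Suc d), vv d) j"
      using mdist_dl[OF a(2) b(2)] ptype_dl[OF a(2) b(2)] D sh3[of m] j Suc by simp
    then show ?thesis using oe by blast
  next
    assume j: "j = 4"
    have "mdist (vv 1, vv 0) (vv d, vv (Suc d)) = d \<and> ptype (vv 1, vv 0) (vv d, vv (Suc d)) j"
      using mdist_dl[OF a(2) b(1)] ptype_dl[OF a(2) b(1)] D sh4[of m] j Suc by simp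
    then show ?thesis using oe by blast
  qed
qed

lemma Gamma_F:
  assumes "j \<in> {1,2,3,4}"
  shows "Gamma k r d j = F k r d j"
proof (cases "r < 0 \<or> r > int k \<or> d > k")
  case True
  then show ?thesis unfolding Gamma_def using F_zero by simp
next
  case False
  let ?P = "\<lambda>n. \<exists>A B. is_oedge A \<and> is_oedge B \<and> mdist A B = d \<and> ptype A B j \<and> n = npaths k (nat r) A B"
  have ex: "\<exists>n. ?P n" using ex_pair[OF assms, of d] by blast
  have all: "n = F k r d j" if Pn: "?P n" for n
  proof -
    obtain A B where "is_oedge A" "is_oedge B" "mdist A B = d" "ptype A B j" "n = npaths k (nat r) A B"
      using Pn by blast
    then show ?thesis using main_count[of A B j k "nat r"] False by simp
  qed
  have "(SOME n. ?P n) = F k r d j" using someI_ex[OF ex] all by blast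
  then show ?thesis unfolding Gamma_def using False by simp
qed



theorem lemma2:
  fixes k d :: nat and r :: int
  assumes "k \<ge> 2"
  shows "(d \<ge> 1 \<longrightarrow>
      Gamma k r d 1 = Gamma (k-1) (r-1) d 2 + Gamma (k-1) r (d-1) 1 + Gamma (k-1) r d 2 \<and>
      Gamma k r d 2 = Gamma (k-1) (r-1) d 1 + 2 * Gamma (k-1) r (d+1) 2 \<and>
      Gamma k r d 3 = Gamma (k-1) (r-1) d 4 + 2 * Gamma (k-1) r (d+1) 3 \<and>
      Gamma k r d 4 = Gamma (k-1) (r-1) d 3 + Gamma (k-1) r (d-1) 4 + Gamma (k-1) r d 3)
    \<and> Gamma k r 0 1 = Gamma (k-1) (r-1) 0 2 + 2 * Gamma (k-1) r 1 3
    \<and> Gamma k r 0 2 = Gamma (k-1) (r-1) 0 1 + 2 * Gamma (k-1) r 1 2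
    \<and> Gamma k r 0 3 = Gamma (k-1) (r-1) 0 4 + 2 * Gamma (k-1) r 1 3
    \<and> Gamma k r 0 4 = Gamma (k-1) (r-1) 0 3 + 2 * Gamma (k-1) r 1 2"
proof -
  obtain k' where k: "k = Suc k'" using assms by (cases k) auto
  have G: "Gamma n s e j = F n s e j" if "j \<in> {1,2,3,4}" for n s e j using Gamma_F that by blast
  have G1: "Gamma n s e 1 = F n s e 1" "Gamma n s e 2 = F n s e 2" "Gamma n s e 3 = F n s e 3"
    "Gamma n s e 4 = F n s e 4" for n s e using G by auto
  show ?thesis unfolding G1 k by (simp add: sw_def tab1_def tab2_def)
qed


end
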